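(* There exist absolute constants $c_1,c_2>0$ such that for every $n\ge1$ and every boolean function $f:\{-1,1\}^n\to\{-1,1\}$, $$\mathrm{Ent}(f)\le c_1 I(f)+c_2\sum_{k=2}^{n} I_k(f)\log\frac{1}{I_k(f)},$$ with the convention $I_k(f)\log\frac{1}{I_k(f)}=0$ when $I_k(f)=0$ (i.e. the term for coordinate $k=1$ can be omitted).
   Context: Let $x$ be uniformly distributed on $\{-1,1\}^n$; $\mu_k$ flips the $k$-th coordinate. $I_k(f)=\mathbb{P}_x[f(x)\neq f(\mu_k(x))]$, $I(f)=\sum_k I_k(f)$, $\hat f(S)=\mathbb{E}_x[f(x)\prod_{k\in S}x_k]$ for $S\subseteq[n]$, and $\mathrm{Ent}(f)=\sum_{S\subseteq[n]}\hat f(S)^2\log_2\frac{1}{\hat f(S)^2}$ (terms with $\hat f(S)=0$ are $0$). *)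

theory Defs
  imports Complex_Main
begin

text \<open>Points of the discrete cube {-1,1}^n, coordinates indexed by 1..n;
  coordinates outside 1..n are fixed to 1 so that the cube is a finite set.\<close>
definition cube :: "nat \<Rightarrow> (nat \<Rightarrow> real) set" where
  "cube n = {x. (\<forall>k\<in>{1..n}. x k = -1 \<or> x k = 1) \<and> (\<forall>k. k \<notin> {1..n} \<longrightarrow> x k = 1)}"

definition flip :: "nat \<Rightarrow> (nat \<Rightarrow> real) \<Rightarrow> (nat \<Rightarrow> real)" where
  "flip k x = x(k := - x k)"

definition infl :: "nat \<Rightarrow> ((nat \<Rightarrow> real) \<Rightarrow> real) \<Rightarrow> nat \<Rightarrow> real" where
  "infl n f k = real (card {x \<in> cube n. f x \<noteq> f (flip k x)}) / 2 ^ n"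

definition total_infl :: "nat \<Rightarrow> ((nat \<Rightarrow> real) \<Rightarrow> real) \<Rightarrow> real" where
  "total_infl n f = (\<Sum>k\<in>{1..n}. infl n f k)"

definition fourier :: "nat \<Rightarrow> ((nat \<Rightarrow> real) \<Rightarrow> real) \<Rightarrow> nat set \<Rightarrow> real" where
  "fourier n f S = (\<Sum>x\<in>cube n. f x * (\<Prod>k\<in>S. x k)) / 2 ^ n"

definition spec_ent :: "nat \<Rightarrow> ((nat \<Rightarrow> real) \<Rightarrow> real) \<Rightarrow> real" where
  "spec_ent n f = (\<Sum>S\<in>Pow {1..n}.
      if fourier n f S = 0 then 0
      else (fourier n f S)^2 * log 2 (1 / (fourier n f S)^2))"

definition xlog :: "real \<Rightarrow> real" where
  "xlog t = (if t = 0 then 0 else t * ln (1 / t))"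

end

theory Submission imports Defs "HOL-Library.FuncSet" begin

lemma cube_bij: "bij_betw (\<lambda>x. restrict x {1..n}) (cube n) (PiE {1..n} (\<lambda>_. {-1::real,1}))"
proof (rule bij_betwI[where g="\<lambda>g k. if k \<in> {1..n} then g k else 1"])
  show "(\<lambda>x. restrict x {1..n}) \<in> cube n \<rightarrow> PiE {1..n} (\<lambda>_. {-1::real,1})"
    by (auto simp: cube_def)
  show "(\<lambda>g k. if k \<in> {1..n} then g k else 1) \<in> PiE {1..n} (\<lambda>_. {-1::real,1}) \<rightarrow> cube n"
    by (auto simp: cube_def PiE_def Pi_def)
  show "(\<lambda>k. if k \<in> {1..n} then restrict x {1..n} k else 1) = x" if "x \<in> cube n" for x
    using that by (auto simp: cube_def)
  show "restrict (\<lambda>k. if k \<in> {1..n} then g k else 1) {1..n} = g" if "g \<in> PiE {1..n} (\<lambda>_. {-1::real,1})" for g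
    using that by (auto simp: PiE_def extensional_def)
qed

lemma cube_finite: "finite (cube n)"
  using bij_betw_finite[OF cube_bij] by (simp add: finite_PiE)

lemma cube_card: "card (cube n) = 2 ^ n"
proof -
  have "card (cube n) = card (PiE {1..n} (\<lambda>_. {-1::real,1}))"
    using bij_betw_same_card[OF cube_bij] .
  also have "\<dots> = 2 ^ n" by (simp add: card_PiE flip: numeral_2_eq_2)
  finally show ?thesis .
qed

lemma cube_val: "x \<in> cube n \<Longrightarrow> k \<in> {1..n} \<Longrightarrow> x k = -1 \<or> x k = 1"
  by (auto simp: cube_def)

lemma flip_cube: "k \<in> {1..n} \<Longrightarrow> x \<in> cube n \<Longrightarrow> flip k x \<in> cube n"
  by (auto simp: cube_def flip_def)

lemma flip_flip: "flip k (flip k x) = x"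
  by (auto simp: flip_def)

lemma flip_bij: "k \<in> {1..n} \<Longrightarrow> bij_betw (flip k) (cube n) (cube n)"
  by (rule bij_betwI[where g="flip k"]) (auto simp: flip_cube flip_flip)

lemma chi_flip: "finite S \<Longrightarrow> (\<Prod>j\<in>S. flip k x j) = (if k \<in> S then - (\<Prod>j\<in>S. x j) else (\<Prod>j\<in>S. x j))"
proof (cases "k \<in> S")
  case True
  assume fS: "finite S"
  have "(\<Prod>j\<in>S. flip k x j) = flip k x k * (\<Prod>j\<in>S-{k}. flip k x j)"
    using prod.remove[OF fS True] .
  also have "(\<Prod>j\<in>S-{k}. flip k x j) = (\<Prod>j\<in>S-{k}. x j)"
    by (rule prod.cong) (auto simp: flip_def)
  also have "(\<Prod>j\<in>S. x j) = x k * (\<Prod>j\<in>S-{k}. x j)"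
    using prod.remove[OF fS True] .
  ultimately show ?thesis using True by (simp add: flip_def)
next
  case False
  then show ?thesis by (auto intro!: prod.cong simp: flip_def)
qed

lemma orth:
  assumes x: "x \<in> cube n" and y: "y \<in> cube n"
  shows "(\<Sum>S\<in>Pow {1..n}. (\<Prod>k\<in>S. x k) * (\<Prod>k\<in>S. y k)) = (if x = y then 2 ^ n else 0)"
proof -
  have "(\<Sum>S\<in>Pow {1..n}. (\<Prod>k\<in>S. x k) * (\<Prod>k\<in>S. y k)) =
        (\<Sum>S\<in>Pow {1..n}. (\<Prod>k\<in>S. x k * y k) * (\<Prod>k\<in>{1..n}-S. 1))"
    by (simp add: prod.distrib)
  also have "\<dots> = (\<Prod>k\<in>{1..n}. x k * y k + 1)"
    by (rule prod_add[symmetric]) simp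
  also have "\<dots> = (if x = y then 2 ^ n else 0)"
  proof (cases "x = y")
    case True
    have "(\<Prod>k\<in>{1..n}. x k * y k + 1) = (\<Prod>k\<in>{1..n}. 2::real)"
    proof (rule prod.cong)
      fix k assume "k \<in> {1..n}"
      then have "x k = -1 \<or> x k = 1" using cube_val[OF x] by blast
      then show "x k * y k + 1 = 2" using True by auto
    qed simp
    then show ?thesis using True by simp
  next
    case False
    have "\<exists>k\<in>{1..n}. x k \<noteq> y k"
    proof (rule ccontr)
      assume "\<not> ?thesis"
      then have "x k = y k" for k using x y by (cases "k \<in> {1..n}") (auto simp: cube_def)
      then show False using False by auto
    qed
    then obtain k where k: "k \<in> {1..n}" "x k \<noteq> y k" by blast
    then have "x k * y k + 1 = 0" using cube_val[OF x k(1)] cube_val[OF y k(1)] by auto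
    then have "(\<Prod>k\<in>{1..n}. x k * y k + 1) = 0"
      using k(1) by (intro prod_zero) auto
    then show ?thesis using False by simp
  qed
  finally show ?thesis .
qed


lemma parseval:
  "(\<Sum>S\<in>Pow {1..n}. (fourier n g S)^2) = (\<Sum>x\<in>cube n. (g x)^2) / 2^n"
proof -
  let ?C = "cube n" and ?P = "Pow {1..n}"
  define N :: real where "N = 2^n"
  have N0: "N \<noteq> 0" by (simp add: N_def)
  have "(\<Sum>S\<in>?P. (fourier n g S)^2) =
        (\<Sum>S\<in>?P. (\<Sum>x\<in>?C. g x * (\<Prod>k\<in>S. x k)) * (\<Sum>y\<in>?C. g y * (\<Prod>k\<in>S. y k))) / (N*N)"
    by (simp only: sum_divide_distrib) (simp add: fourier_def power2_eq_square N_def)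
  also have "(\<Sum>S\<in>?P. (\<Sum>x\<in>?C. g x * (\<Prod>k\<in>S. x k)) * (\<Sum>y\<in>?C. g y * (\<Prod>k\<in>S. y k))) =
        (\<Sum>S\<in>?P. \<Sum>x\<in>?C. \<Sum>y\<in>?C. g x * g y * ((\<Prod>k\<in>S. x k) * (\<Prod>k\<in>S. y k)))"
    by (simp add: sum_product algebra_simps)
  also have "\<dots> = (\<Sum>x\<in>?C. \<Sum>y\<in>?C. \<Sum>S\<in>?P. g x * g y * ((\<Prod>k\<in>S. x k) * (\<Prod>k\<in>S. y k)))"
    by (rule trans[OF sum.swap], rule sum.cong[OF refl], rule sum.swap)
  also have "\<dots> = (\<Sum>x\<in>?C. \<Sum>y\<in>?C. g x * g y * (\<Sum>S\<in>?P. (\<Prod>k\<in>S. x k) * (\<Prod>k\<in>S. y k)))"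
    by (simp add: sum_distrib_left)
  also have "\<dots> = (\<Sum>x\<in>?C. \<Sum>y\<in>?C. (if x = y then g x * g y * N else 0))"
    by (intro sum.cong refl) (subst orth, auto simp: N_def)
  also have "\<dots> = (\<Sum>x\<in>?C. g x * g x * N)"
    by (intro sum.cong refl) (simp add: cube_finite)
  finally show ?thesis using N0
    by (simp add: power2_eq_square N_def sum_distrib_right[symmetric])
qed

lemma fourier_diff:
  assumes k: "k \<in> {1..n}" and fS: "finite S"
  shows "fourier n (\<lambda>x. (f x - f (flip k x)) / 2) S = (if k \<in> S then fourier n f S else 0)"
proof -
  have "(\<Sum>x\<in>cube n. f (flip k x) * (\<Prod>j\<in>S. x j)) =
        (\<Sum>x\<in>cube n. f (flip k x) * (\<Prod>j\<in>S. flip k (flip k x) j))"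
    by (simp add: flip_flip)
  also have "\<dots> = (\<Sum>y\<in>cube n. f y * (\<Prod>j\<in>S. flip k y j))"
    by (rule sum.reindex_bij_betw[OF flip_bij[OF k], where g="\<lambda>y. f y * (\<Prod>j\<in>S. flip k y j)"])
  also have "\<dots> = (if k \<in> S then - (\<Sum>y\<in>cube n. f y * (\<Prod>j\<in>S. y j)) else (\<Sum>y\<in>cube n. f y * (\<Prod>j\<in>S. y j)))"
    by (simp add: chi_flip[OF fS] sum_negf)
  finally have *: "(\<Sum>x\<in>cube n. f (flip k x) * (\<Prod>j\<in>S. x j)) = \<dots>" .
  have "(\<Sum>x\<in>cube n. (f x - f (flip k x)) / 2 * (\<Prod>j\<in>S. x j)) =
        ((\<Sum>x\<in>cube n. f x * (\<Prod>j\<in>S. x j)) - (\<Sum>x\<in>cube n. f (flip k x) * (\<Prod>j\<in>S. x j))) / 2"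
    by (simp add: sum_divide_distrib[symmetric] sum_subtractf[symmetric] algebra_simps)
  then show ?thesis using * by (cases "k \<in> S") (simp_all add: fourier_def)
qed


lemma g_sq:
  fixes f :: "(nat \<Rightarrow> real) \<Rightarrow> real"
  assumes hf: "\<forall>x\<in>cube n. f x = -1 \<or> f x = 1" and k: "k \<in> {1..n}" and x: "x \<in> cube n"
  shows "((f x - f (flip k x)) / 2)^2 = (if f x \<noteq> f (flip k x) then 1 else 0)"
    and "\<bar>(f x - f (flip k x)) / 2\<bar> = (if f x \<noteq> f (flip k x) then 1 else 0)"
proof -
  have a: "f x = -1 \<or> f x = 1" using hf x by blast
  have b: "f (flip k x) = -1 \<or> f (flip k x) = 1" using hf flip_cube[OF k x] by blast
  show "((f x - f (flip k x)) / 2)^2 = (if f x \<noteq> f (flip k x) then 1 else 0)"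
    using a b by (auto simp: power2_eq_square)
  show "\<bar>(f x - f (flip k x)) / 2\<bar> = (if f x \<noteq> f (flip k x) then 1 else 0)"
    using a b by auto
qed

lemma sum_g_sq:
  assumes hf: "\<forall>x\<in>cube n. f x = -1 \<or> f x = 1" and k: "k \<in> {1..n}"
  shows "(\<Sum>x\<in>cube n. ((f x - f (flip k x)) / 2)^2) / 2^n = infl n f k"
proof -
  have "(\<Sum>x\<in>cube n. ((f x - f (flip k x)) / 2)^2) = (\<Sum>x\<in>cube n. (if f x \<noteq> f (flip k x) then 1 else 0))"
    by (intro sum.cong refl) (simp add: g_sq(1)[OF hf k])
  also have "\<dots> = real (card {x \<in> cube n. f x \<noteq> f (flip k x)})"
    by (simp add: sum.If_cases cube_finite Int_def)
  finally show ?thesis by (simp add: infl_def)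
qed

lemma sum_p:
  assumes hf: "\<forall>x\<in>cube n. f x = -1 \<or> f x = 1"
  shows "(\<Sum>S\<in>Pow {1..n}. (fourier n f S)^2) = 1"
proof -
  have "(\<Sum>x\<in>cube n. (f x)^2) = (\<Sum>x\<in>cube n. 1)"
    by (intro sum.cong refl) (use hf in auto)
  also have "\<dots> = 2 ^ n" by (simp add: cube_card)
  finally show ?thesis by (simp only: parseval) simp
qed

lemma spec_infl:
  assumes hf: "\<forall>x\<in>cube n. f x = -1 \<or> f x = 1" and k: "k \<in> {1..n}"
  shows "(\<Sum>S\<in>Pow {1..n}. if k \<in> S then (fourier n f S)^2 else 0) = infl n f k"
proof -
  have "(\<Sum>S\<in>Pow {1..n}. if k \<in> S then (fourier n f S)^2 else 0) =
        (\<Sum>S\<in>Pow {1..n}. (fourier n (\<lambda>x. (f x - f (flip k x)) / 2) S)^2)"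
  proof (intro sum.cong refl)
    fix S assume "S \<in> Pow {1..n}"
    then have "finite S" by (auto intro: finite_subset)
    then show "(if k \<in> S then (fourier n f S)^2 else 0) = (fourier n (\<lambda>x. (f x - f (flip k x)) / 2) S)^2"
      by (simp add: fourier_diff[OF k])
  qed
  also have "\<dots> = infl n f k" by (simp only: parseval sum_g_sq[OF hf k])
  finally show ?thesis .
qed

lemma fourier1_le:
  assumes hf: "\<forall>x\<in>cube n. f x = -1 \<or> f x = 1" and n: "n \<ge> 1"
  shows "\<bar>fourier n f {1}\<bar> \<le> infl n f 1"
proof -
  have k: "1 \<in> {1..n}" using n by simp
  let ?g = "\<lambda>x. (f x - f (flip 1 x)) / 2"
  have "fourier n f {1} = fourier n ?g {1}" using fourier_diff[OF k, of "{1}" f] by simp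
  also have "\<dots> = (\<Sum>x\<in>cube n. ?g x * x 1) / 2^n" by (simp add: fourier_def)
  finally have "\<bar>fourier n f {1}\<bar> = \<bar>\<Sum>x\<in>cube n. ?g x * x 1\<bar> / 2^n" by simp
  also have "\<dots> \<le> (\<Sum>x\<in>cube n. \<bar>?g x * x 1\<bar>) / 2^n"
    by (intro divide_right_mono sum_abs) simp
  also have "(\<Sum>x\<in>cube n. \<bar>?g x * x 1\<bar>) = (\<Sum>x\<in>cube n. (?g x)^2)"
  proof (intro sum.cong refl)
    fix x assume x: "x \<in> cube n"
    have "\<bar>x 1\<bar> = 1" using cube_val[OF x k] by auto
    then have "\<bar>?g x * x 1\<bar> = \<bar>?g x\<bar>" by (simp add: abs_mult)
    then show "\<bar>?g x * x 1\<bar> = (?g x)^2" by (simp only: g_sq[OF hf k x])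
  qed
  also have "(\<Sum>x\<in>cube n. (?g x)^2) / 2^n = infl n f 1" by (rule sum_g_sq[OF hf k])
  finally show ?thesis .
qed

lemma ln_one_div: "ln (1 / x) = - ln (x::real)"
  by (metis ln_inverse inverse_eq_divide)

lemma gibbs: assumes "(p::real) > 0" "q > 0" shows "- p * ln p \<le> p * (- ln q) + q - p"
proof -
  have "ln (q / p) \<le> q / p - 1" using assms by (intro ln_le_minus_one) simp
  then have "p * ln (q/p) \<le> p * (q/p - 1)" using assms by (intro mult_left_mono) auto
  moreover have "ln (q/p) = ln q - ln p" using assms by (simp add: ln_div)
  ultimately show ?thesis using assms by (simp add: algebra_simps)
qed

lemma ent_bound: assumes "0 \<le> (t::real)" "t \<le> 1"
  shows "t * (- ln t) + (1 - t) * (- ln (1 - t)) \<le> (if t = 0 then 0 else t * ln (1 / t)) + t"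
proof -
  have a: "t * (- ln t) = (if t = 0 then 0 else t * ln (1 / t))" by (simp add: ln_one_div)
  have "(1 - t) * (- ln (1 - t)) \<le> t"
  proof (cases "t = 1")
    case True then show ?thesis by simp
  next
    case False
    then have u: "1 - t > 0" using assms by simp
    have "ln (1 / (1 - t)) \<le> 1 / (1 - t) - 1" using u by (intro ln_le_minus_one) simp
    then have "(1 - t) * ln (1 / (1 - t)) \<le> (1 - t) * (1 / (1 - t) - 1)"
      using u by (intro mult_left_mono) auto
    also have "\<dots> = t" using u by (simp add: field_simps)
    finally show ?thesis by (simp add: ln_one_div)
  qed
  then show ?thesis using a by linarith
qed

lemma ab_bound1: assumes "(a::real) \<ge> 0" "b \<ge> 0" shows "a * (- ln (1 - b / (a + b))) \<le> b"
proof (cases "a = 0")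
  case True then show ?thesis using assms by simp
next
  case False
  then have a: "a > 0" using assms by simp
  have "1 - b / (a + b) = a / (a + b)" using a assms by (simp add: field_simps)
  then have "- ln (1 - b / (a + b)) = ln ((a + b) / a)" using a assms
    by (simp add: ln_div)
  also have "\<dots> \<le> (a + b) / a - 1" using a assms by (intro ln_le_minus_one) simp
  also have "\<dots> = b / a" using a by (simp add: field_simps)
  finally have "a * (- ln (1 - b / (a + b))) \<le> a * (b / a)" using a by (intro mult_left_mono) auto
  then show ?thesis using a by simp
qed

lemma ab_bound2: assumes "(a::real) \<ge> 0" "b \<ge> 0" "a + b \<le> 1" "b = s^2" "0 \<le> s"
  shows "b * (- ln (b / (a + b))) \<le> 2 * s"
proof (cases "b = 0")
  case True then show ?thesis using assms by simp
next
  case False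
  then have b: "b > 0" using assms by simp
  then have s: "s > 0" using assms by (cases "s = 0") auto
  have "- ln (b / (a + b)) = ln ((a + b) / b)" using b assms by (simp add: ln_div)
  also have "\<dots> \<le> ln (1 / b)"
  proof (rule ln_mono)
    have "0 < a + b" using b assms by linarith
    then show "0 < (a + b) / b" using b by (intro divide_pos_pos) auto
  qed (use b assms in \<open>auto simp: divide_right_mono\<close>)
  also have "ln (1 / b) = 2 * ln (1 / s)" using assms s by (simp add: ln_one_div ln_realpow)
  also have "ln (1 / s) \<le> 1 / s - 1" using s by (intro ln_le_minus_one) simp
  finally have "- ln (b / (a + b)) \<le> 2 * (1 / s - 1)" by simp
  then have "b * (- ln (b / (a + b))) \<le> b * (2 * (1 / s - 1))" using b by (intro mult_left_mono) auto
  also have "\<dots> = 2 * s - 2 * s^2" using assms s by (simp add: field_simps power2_eq_square)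
  also have "\<dots> \<le> 2 * s" by simp
  finally show ?thesis .
qed


lemma main_bound:
  assumes hf: "\<forall>x\<in>cube n. f x = -1 \<or> f x = 1" and n: "n \<ge> 1"
  shows "ln 2 * spec_ent n f \<le> 3 * total_infl n f + (\<Sum>k\<in>{2..n}. xlog (infl n f k))"
proof -
  define P where "P = Pow {1..n}"
  define A where "A = {2..n}"
  define p where "p S = (fourier n f S)^2" for S
  define t where "t k = infl n f k" for k
  define a where "a = p {}"
  define b where "b = p {1}"
  define \<beta> where "\<beta> = b / (a + b)"
  define B where "B S = (if S \<inter> A \<noteq> {} then 1/2 else if 1 \<in> S then \<beta> else 1 - \<beta>)" for S :: "nat set"
  define e where "e k S = (if k \<in> S then t k else 1 - t k)" for k S
  define q where "q S = (\<Prod>k\<in>A. e k S) * B S" for S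
  define L where "L S = (\<Sum>k\<in>A. - ln (e k S)) + - ln (B S)" for S
  have finP: "finite P" by (simp add: P_def)
  have finA: "finite A" by (simp add: A_def)
  have AP: "A \<subseteq> {1..n}" by (auto simp: A_def)
  have one: "1 \<in> {1..n}" using n by simp
  have one_A: "1 \<notin> A" by (simp add: A_def)
  have p_nn: "p S \<ge> 0" for S by (simp add: p_def)
  have sp: "sum p P = 1" using sum_p[OF hf] by (simp add: p_def P_def)
  have tk: "t k = (\<Sum>S\<in>P. if k \<in> S then p S else 0)" if "k \<in> {1..n}" for k
    unfolding p_def P_def t_def using spec_infl[OF hf that] by simp
  have tk': "1 - t k = (\<Sum>S\<in>P. if k \<in> S then 0 else p S)" if "k \<in> {1..n}" for k
  proof -
    have "sum p P = (\<Sum>S\<in>P. (if k \<in> S then p S else 0) + (if k \<in> S then 0 else p S))"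
      by (intro sum.cong) auto
    then show ?thesis using sp tk[OF that] by (simp add: sum.distrib)
  qed
  have le_t: "p S \<le> t k" if "S \<in> P" "k \<in> {1..n}" "k \<in> S" for S k
  proof -
    have "(if k \<in> S then p S else 0) \<le> (\<Sum>S\<in>P. if k \<in> S then p S else 0)"
      by (rule member_le_sum) (use that finP p_nn in auto)
    then show ?thesis using that tk by simp
  qed
  have le_t': "p S \<le> 1 - t k" if "S \<in> P" "k \<in> {1..n}" "k \<notin> S" for S k
  proof -
    have "(if k \<in> S then 0 else p S) \<le> (\<Sum>S\<in>P. if k \<in> S then 0 else p S)"
      by (rule member_le_sum) (use that finP p_nn in auto)
    then show ?thesis using that tk' by simp
  qed
  have t_nn: "0 \<le> t k" if "k \<in> {1..n}" for k
    using tk[OF that] p_nn by (auto intro: sum_nonneg)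
  have t_le: "t k \<le> 1" if "k \<in> {1..n}" for k
  proof -
    have "0 \<le> (\<Sum>S\<in>P. if k \<in> S then 0 else p S)" using p_nn by (auto intro: sum_nonneg)
    then show ?thesis using tk'[OF that] by simp
  qed
  have a_nn: "a \<ge> 0" and b_nn: "b \<ge> 0" by (auto simp: a_def b_def p_nn)
  have ab1: "a + b \<le> 1"
  proof -
    have "sum p {{}, {1}} \<le> sum p P"
      by (rule sum_mono2) (use finP one p_nn in \<open>auto simp: P_def\<close>)
    then show ?thesis using sp by (simp add: a_def b_def)
  qed
  have e_nn: "0 \<le> e k S" if "k \<in> A" for k S
    using t_nn[of k] t_le[of k] that AP by (auto simp: e_def)
  have beta: "0 \<le> \<beta>" "\<beta> \<le> 1" using a_nn b_nn by (auto simp: \<beta>_def divide_le_eq_1)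
  have B_nn: "0 \<le> B S" for S using beta by (simp add: B_def)
  have q_nn: "0 \<le> q S" for S
    unfolding q_def using e_nn B_nn by (intro mult_nonneg_nonneg prod_nonneg) auto
  have small: "S = {} \<or> S = {1}" if "S \<in> P" "S \<inter> A = {}" for S
  proof -
    have "S \<subseteq> {1}"
    proof
      fix x assume x: "x \<in> S"
      then have "x \<in> {1..n}" using that by (auto simp: P_def)
      moreover have "x \<notin> A" using x that by blast
      ultimately show "x \<in> {1}" by (auto simp: A_def)
    qed
    then show ?thesis by auto
  qed
  have pw: "(if p S = 0 then 0 else - p S * ln (p S)) \<le> p S * L S + q S - p S" if S: "S \<in> P" for S
  proof (cases "p S = 0")
    case True then show ?thesis using q_nn[of S] by simp
  next
    case False
    then have pS: "p S > 0" using p_nn[of S] by simp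
    have e_pos: "e k S > 0" if "k \<in> A" for k
    proof (cases "k \<in> S")
      case True then show ?thesis using le_t[OF S, of k] pS that AP by (auto simp: e_def)
    next
      case False then show ?thesis using le_t'[OF S, of k] pS that AP by (auto simp: e_def)
    qed
    have B_pos: "B S > 0"
    proof (cases "S \<inter> A = {}")
      case False then show ?thesis by (simp add: B_def)
    next
      case True
      from small[OF S True] show ?thesis
      proof
        assume "S = {}"
        then have "a > 0" using pS by (simp add: a_def)
        then have "1 - \<beta> = a / (a + b)" using b_nn by (simp add: \<beta>_def field_simps)
        then show ?thesis using \<open>a > 0\<close> b_nn True \<open>S = {}\<close> by (simp add: B_def)
      next
        assume "S = {1}"
        then have "b > 0" using pS by (simp add: b_def)
        then show ?thesis using a_nn True \<open>S = {1}\<close> by (simp add: B_def \<beta>_def)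
      qed
    qed
    have prod_pos: "(\<Prod>k\<in>A. e k S) > 0" using e_pos by (intro prod_pos) auto
    have "ln (q S) = ln (\<Prod>k\<in>A. e k S) + ln (B S)"
      using prod_pos B_pos by (simp add: q_def ln_mult)
    also have "ln (\<Prod>k\<in>A. e k S) = (\<Sum>k\<in>A. ln (e k S))"
      using e_pos finA by (intro ln_prod) force+
    finally have "L S = - ln (q S)" by (simp add: L_def sum_negf)
    moreover have "q S > 0" using prod_pos B_pos by (simp add: q_def)
    ultimately show ?thesis using gibbs[OF pS] False by simp
  qed
  have sq: "sum q P = 1"
  proof -
    have P_eq: "P = Pow A \<union> insert 1 ` Pow A"
    proof -
      have "{1..n} = insert 1 A" using n by (auto simp: A_def)
      then show ?thesis by (simp add: P_def Pow_insert)
    qed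
    have disj: "Pow A \<inter> insert 1 ` Pow A = {}" using one_A by auto
    have inj: "inj_on (insert 1) (Pow A)"
    proof (rule inj_onI)
      fix X Y assume X: "X \<in> Pow A" and Y: "Y \<in> Pow A" and eq: "insert 1 X = insert 1 Y"
      have "1 \<notin> X" "1 \<notin> Y" using X Y one_A by auto
      then have "X = insert 1 X - {1}" "Y = insert 1 Y - {1}" by auto
      then show "X = Y" using eq by metis
    qed
    have "sum q P = (\<Sum>T\<in>Pow A. q T) + (\<Sum>T\<in>Pow A. q (insert 1 T))"
    proof -
      have ri: "sum q (insert 1 ` Pow A) = (\<Sum>T\<in>Pow A. q (insert 1 T))"
        using sum.reindex[OF inj, of q] by (simp add: comp_def)
      show ?thesis using disj finA ri by (simp add: P_eq sum.union_disjoint)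
    qed
    also have "\<dots> = (\<Sum>T\<in>Pow A. (\<Prod>k\<in>A. e k T))"
      unfolding sum.distrib[symmetric]
    proof (intro sum.cong refl)
      fix T assume T: "T \<in> Pow A"
      have ee: "(\<Prod>k\<in>A. e k (insert 1 T)) = (\<Prod>k\<in>A. e k T)"
        by (intro prod.cong refl) (use one_A in \<open>auto simp: e_def\<close>)
      have "B T + B (insert 1 T) = 1"
        using T one_A by (auto simp: B_def)
      then show "q T + q (insert 1 T) = (\<Prod>k\<in>A. e k T)"
        using ee by (simp add: q_def flip: distrib_left)
    qed
    also have "\<dots> = (\<Sum>T\<in>Pow A. (\<Prod>k\<in>T. t k) * (\<Prod>k\<in>A-T. 1 - t k))"
    proof (intro sum.cong refl)
      fix T assume T: "T \<in> Pow A"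
      have "(\<Prod>k\<in>A. e k T) = (\<Prod>k\<in>A \<inter> {k. k \<in> T}. t k) * (\<Prod>k\<in>A \<inter> - {k. k \<in> T}. 1 - t k)"
        unfolding e_def by (rule prod.If_cases[OF finA])
      also have "A \<inter> {k. k \<in> T} = T" using T by auto
      also have "A \<inter> - {k. k \<in> T} = A - T" by auto
      finally show "(\<Prod>k\<in>A. e k T) = (\<Prod>k\<in>T. t k) * (\<Prod>k\<in>A-T. 1 - t k)" .
    qed
    also have "\<dots> = (\<Prod>k\<in>A. t k + (1 - t k))" by (rule prod_add[OF finA, symmetric])
    also have "\<dots> = 1" by simp
    finally show ?thesis .
  qed
  have ent: "ln 2 * spec_ent n f = (\<Sum>S\<in>P. if p S = 0 then 0 else - p S * ln (p S))"
    unfolding spec_ent_def sum_distrib_left P_def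
    by (intro sum.cong refl) (simp add: p_def log_def ln_one_div)
  have step1: "ln 2 * spec_ent n f \<le> (\<Sum>S\<in>P. p S * L S)"
  proof -
    have "ln 2 * spec_ent n f \<le> (\<Sum>S\<in>P. p S * L S + q S - p S)"
      unfolding ent by (rule sum_mono) (rule pw)
    also have "\<dots> = (\<Sum>S\<in>P. p S * L S) + sum q P - sum p P"
      by (simp add: sum.distrib sum_subtractf)
    finally show ?thesis using sp sq by simp
  qed
  have split: "(\<Sum>S\<in>P. p S * L S) =
     (\<Sum>k\<in>A. \<Sum>S\<in>P. p S * (- ln (e k S))) + (\<Sum>S\<in>P. p S * (- ln (B S)))"
    unfolding L_def distrib_left sum.distrib sum_distrib_left
    by (subst sum.swap) simp
  have partA: "(\<Sum>S\<in>P. p S * (- ln (e k S))) \<le> xlog (t k) + t k" if k: "k \<in> A" for k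
  proof -
    have k1: "k \<in> {1..n}" using k AP by auto
    have "(\<Sum>S\<in>P. p S * (- ln (e k S))) =
          (\<Sum>S\<in>P. (- ln (t k)) * (if k \<in> S then p S else 0) + (- ln (1 - t k)) * (if k \<in> S then 0 else p S))"
      by (intro sum.cong refl) (simp add: e_def)
    also have "\<dots> = (- ln (t k)) * (\<Sum>S\<in>P. if k \<in> S then p S else 0) + (- ln (1 - t k)) * (\<Sum>S\<in>P. if k \<in> S then 0 else p S)"
      by (simp only: sum.distrib sum_distrib_left)
    also have "\<dots> = t k * (- ln (t k)) + (1 - t k) * (- ln (1 - t k))"
      by (simp only: tk[OF k1, symmetric] tk'[OF k1, symmetric]) (simp add: algebra_simps)
    also have "\<dots> \<le> xlog (t k) + t k"
      using ent_bound[OF t_nn[OF k1] t_le[OF k1]] by (simp add: xlog_def)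
    finally show ?thesis .
  qed
  have fb: "b = (fourier n f {1})^2" by (simp add: b_def p_def)
  have s1: "\<bar>fourier n f {1}\<bar> \<le> t 1" using fourier1_le[OF hf n] by (simp add: t_def)
  have partB: "(\<Sum>S\<in>P. p S * (- ln (B S))) \<le> (\<Sum>k\<in>A. t k) + b + 2 * t 1"
  proof -
    have pwB: "p S * (- ln (B S)) \<le> (\<Sum>k\<in>A. if k \<in> S then p S else 0)
        + (if S = {} then a * (- ln (1 - \<beta>)) else 0) + (if S = {1} then b * (- ln \<beta>) else 0)"
      if S: "S \<in> P" for S
    proof (cases "S \<inter> A = {}")
      case False
      then obtain k where k: "k \<in> S" "k \<in> A" by auto
      have "p S = (if k \<in> S then p S else 0)" using k by simp
      also have "\<dots> \<le> (\<Sum>k\<in>A. if k \<in> S then p S else 0)"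
        by (rule member_le_sum) (use k finA p_nn in auto)
      finally have h1: "p S \<le> (\<Sum>k\<in>A. if k \<in> S then p S else 0)" .
      have "p S * (- ln (B S)) = p S * ln 2" using False by (simp add: B_def ln_one_div)
      also have "\<dots> \<le> p S" using ln_2_less_1 p_nn[of S] by (simp add: mult_left_le)
      finally have "p S * (- ln (B S)) \<le> (\<Sum>k\<in>A. if k \<in> S then p S else 0)" using h1 by linarith
      moreover have "S \<noteq> {}" "S \<noteq> {1}" using k one_A by auto
      ultimately show ?thesis by simp
    next
      case True
      have h0: "0 \<le> (\<Sum>k\<in>A. if k \<in> S then p S else 0)" using p_nn by (auto intro: sum_nonneg)
      from small[OF S True] show ?thesis
      proof
        assume "S = {}" then show ?thesis using h0 by (simp add: B_def a_def)
      next
        assume "S = {1}" then show ?thesis using h0 one_A by (simp add: B_def b_def)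
      qed
    qed
    have "(\<Sum>S\<in>P. p S * (- ln (B S))) \<le> (\<Sum>S\<in>P. (\<Sum>k\<in>A. if k \<in> S then p S else 0)
        + (if S = {} then a * (- ln (1 - \<beta>)) else 0) + (if S = {1} then b * (- ln \<beta>) else 0))"
      by (rule sum_mono) (rule pwB)
    also have "\<dots> = (\<Sum>k\<in>A. t k) + a * (- ln (1 - \<beta>)) + b * (- ln \<beta>)"
    proof -
      have "(\<Sum>S\<in>P. \<Sum>k\<in>A. if k \<in> S then p S else 0) = (\<Sum>k\<in>A. \<Sum>S\<in>P. if k \<in> S then p S else 0)"
        by (rule sum.swap)
      also have "\<dots> = (\<Sum>k\<in>A. t k)" using AP by (intro sum.cong refl) (auto simp: tk)
      finally have h: "(\<Sum>S\<in>P. \<Sum>k\<in>A. if k \<in> S then p S else 0) = (\<Sum>k\<in>A. t k)" .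
      have e1: "{} \<in> P" "{1} \<in> P" using one by (auto simp: P_def)
      show ?thesis using h e1 finP by (simp add: sum.distrib)
    qed
    also have "\<dots> \<le> (\<Sum>k\<in>A. t k) + b + 2 * t 1"
    proof -
      have "a * (- ln (1 - \<beta>)) \<le> b" unfolding \<beta>_def by (rule ab_bound1[OF a_nn b_nn])
      moreover have "b * (- ln \<beta>) \<le> 2 * \<bar>fourier n f {1}\<bar>"
        unfolding \<beta>_def by (rule ab_bound2[OF a_nn b_nn ab1]) (auto simp: fb)
      ultimately show ?thesis using s1 by linarith
    qed
    finally show ?thesis .
  qed
  have b_le: "b \<le> t 1"
  proof -
    have "\<bar>fourier n f {1}\<bar> \<le> 1" using s1 t_le[OF one] by linarith
    then have "b \<le> \<bar>fourier n f {1}\<bar>" unfolding fb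
      by (metis abs_ge_zero abs_le_square_iff abs_square_le_1 power2_abs power2_eq_square mult_left_le)
    then show ?thesis using s1 by linarith
  qed
  have tot: "total_infl n f = t 1 + (\<Sum>k\<in>A. t k)"
  proof -
    have "{1..n} = insert 1 A" using n by (auto simp: A_def)
    then show ?thesis using one_A finA by (simp add: total_infl_def t_def)
  qed
  have At: "0 \<le> (\<Sum>k\<in>A. t k)"
  proof (rule sum_nonneg)
    fix k assume "k \<in> A" then show "0 \<le> t k" using t_nn AP by blast
  qed
  have "(\<Sum>k\<in>A. \<Sum>S\<in>P. p S * (- ln (e k S))) \<le> (\<Sum>k\<in>A. xlog (t k) + t k)"
    by (rule sum_mono) (rule partA)
  then have "ln 2 * spec_ent n f \<le> (\<Sum>k\<in>A. xlog (t k)) + 2 * (\<Sum>k\<in>A. t k) + b + 2 * t 1"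
    using step1 split partB by (simp add: sum.distrib)
  then show ?thesis using b_le tot At t_nn[OF one] by (simp add: A_def t_def)
qed


theorem mainTheorem3:
  shows "\<exists>c1 c2 :: real. c1 > 0 \<and> c2 > 0 \<and>
    (\<forall>n::nat. \<forall>f :: (nat \<Rightarrow> real) \<Rightarrow> real.
       n \<ge> 1 \<longrightarrow> (\<forall>x\<in>cube n. f x = -1 \<or> f x = 1) \<longrightarrow>
       spec_ent n f \<le> c1 * total_infl n f + c2 * (\<Sum>k\<in>{2..n}. xlog (infl n f k)))"
proof -
  have m: "spec_ent n f \<le> 3 / ln 2 * total_infl n f + 1 / ln 2 * (\<Sum>k\<in>{2..n}. xlog (infl n f k))"
    if n: "n \<ge> 1" and hf: "\<forall>x\<in>cube n. f x = -1 \<or> f x = 1" for n f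
  proof -
  have l2: "ln (2::real) > 0" by simp
  have "ln 2 * spec_ent n f \<le> 3 * total_infl n f + (\<Sum>k\<in>{2..n}. xlog (infl n f k))"
    by (rule main_bound[OF hf n])
  then have "spec_ent n f \<le> (3 * total_infl n f + (\<Sum>k\<in>{2..n}. xlog (infl n f k))) / ln 2"
    using l2 by (simp add: field_simps)
  then show "spec_ent n f \<le> 3 / ln 2 * total_infl n f + 1 / ln 2 * (\<Sum>k\<in>{2..n}. xlog (infl n f k))"
    by (simp add: add_divide_distrib)
  qed
  show ?thesis
    apply (rule exI[of _ "3 / ln 2"], rule exI[of _ "1 / ln 2"])
    apply (intro conjI)
    using m by auto
qed

end
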